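(* Let $V$ be a real Lorentzian vector space (signature $(1,q)$) of dimension $m=1+q\ge 3$, and let $R$ be an algebraic curvature tensor on $V$. If $\operatorname{trace}\{\mathcal{J}_R(x)^2\}=0$ for every complex null vector $x\in\mathcal{N}$, then $R$ has constant sectional curvature, i.e. there is a constant $c$ with $R(x,y,z,w)=c\{(x,w)(y,z)-(x,z)(y,w)\}$ for all $x,y,z,w\in V$.
   Context: An algebraic curvature tensor is $R\in\otimes^4V^*$ with $R(x,y,z,w)=R(z,w,x,y)=-R(y,x,z,w)$ and $R(x,y,z,w)+R(y,z,x,w)+R(z,x,y,w)=0$. The Jacobi operator $\mathcal{J}_R(x)$ is defined by $(\mathcal{J}_R(x)y,w)=R(y,x,x,w)$. The inner product, $R$ and $\mathcal{J}_R$ are extended complex-multilinearly to $V_{\mathbb{C}}=V\otimes\mathbb{C}$; $\mathcal{N}=\{v\in V_{\mathbb{C}}:(v,v)=0\}$. *)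

theory Defs
  imports "HOL-Analysis.Analysis"
begin

text \<open>Model: V = real^'n (coordinates w.r.t. a fixed basis), dim V = CARD('n).
  The inner product is given by its Gram matrix G, a 4-tensor R in (V*)^{\<otimes>4}
  by its components T i j k l = R(e_i,e_j,e_k,e_l).\<close>

definition ip :: "real^'n::finite^'n \<Rightarrow> real^'n \<Rightarrow> real^'n \<Rightarrow> real" where
  "ip G x y = (\<Sum>i\<in>UNIV. \<Sum>j\<in>UNIV. G$i$j * x$i * y$j)"

definition tens :: "('n::finite \<Rightarrow> 'n \<Rightarrow> 'n \<Rightarrow> 'n \<Rightarrow> real) \<Rightarrow> real^'n \<Rightarrow> real^'n \<Rightarrow> real^'n \<Rightarrow> real^'n \<Rightarrow> real" where
  "tens T x y z w = (\<Sum>i\<in>UNIV. \<Sum>j\<in>UNIV. \<Sum>k\<in>UNIV. \<Sum>l\<in>UNIV.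
      T i j k l * x$i * y$j * z$k * w$l)"

text \<open>Complex-multilinear extensions to V_C = complex^'n.\<close>

definition cip :: "real^'n::finite^'n \<Rightarrow> complex^'n \<Rightarrow> complex^'n \<Rightarrow> complex" where
  "cip G x y = (\<Sum>i\<in>UNIV. \<Sum>j\<in>UNIV. complex_of_real (G$i$j) * x$i * y$j)"

definition ctens :: "('n::finite \<Rightarrow> 'n \<Rightarrow> 'n \<Rightarrow> 'n \<Rightarrow> real) \<Rightarrow> complex^'n \<Rightarrow> complex^'n \<Rightarrow> complex^'n \<Rightarrow> complex^'n \<Rightarrow> complex" where
  "ctens T x y z w = (\<Sum>i\<in>UNIV. \<Sum>j\<in>UNIV. \<Sum>k\<in>UNIV. \<Sum>l\<in>UNIV.
      complex_of_real (T i j k l) * x$i * y$j * z$k * w$l)"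

text \<open>Lorentzian inner product of signature (1,q): symmetric, and congruent to
  diag(-1,1,...,1), i.e. there is a basis e_1..e_m with (e_i,e_j) = \<epsilon>_i \<delta>_ij,
  exactly one \<epsilon>_i = -1.\<close>

definition lorentzian :: "real^'n::finite^'n \<Rightarrow> bool" where
  "lorentzian G \<longleftrightarrow> transpose G = G \<and>
     (\<exists>(P::real^'n^'n) (i0::'n). invertible P \<and>
        transpose P ** G ** P = (\<chi> i j. if i = j then (if i = i0 then -1 else 1) else 0))"

definition algebraic_curvature_tensor :: "('n::finite \<Rightarrow> 'n \<Rightarrow> 'n \<Rightarrow> 'n \<Rightarrow> real) \<Rightarrow> bool" where
  "algebraic_curvature_tensor T \<longleftrightarrow>
     (\<forall>x y z w. tens T x y z w = tens T z w x y) \<and>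
     (\<forall>x y z w. tens T x y z w = - tens T y x z w) \<and>
     (\<forall>x y z w. tens T x y z w + tens T y z x w + tens T z x y w = 0)"

text \<open>Jacobi operator on V_C: the (unique, by nondegeneracy) linear map J with
  (J y, w) = R(y,x,x,w).\<close>

definition jacobi :: "real^'n::finite^'n \<Rightarrow> ('n \<Rightarrow> 'n \<Rightarrow> 'n \<Rightarrow> 'n \<Rightarrow> real) \<Rightarrow> complex^'n \<Rightarrow> complex^'n^'n" where
  "jacobi G T x = (THE J. \<forall>y w. cip G (J *v y) w = ctens T y x x w)"

definition null_cone :: "real^'n::finite^'n \<Rightarrow> (complex^'n) set" where
  "null_cone G = {v. cip G v v = 0}"

end

theory Submission
  imports Defs
begin


lemma ip_inner: "ip G x y = inner x (G *v y)"
  by (simp add: ip_def inner_vec_def matrix_vector_mult_def sum_distrib_left ac_simps)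

lemma ip_add1: "ip G (x + x') y = ip G x y + ip G x' y"
  by (simp add: ip_inner inner_add_left)
lemma ip_add2: "ip G x (y + y') = ip G x y + ip G x y'"
  by (simp add: ip_inner inner_add_right matrix_vector_right_distrib)
lemma ip_diff1: "ip G (x - x') y = ip G x y - ip G x' y"
  by (simp add: ip_inner inner_diff_left)
lemma ip_diff2: "ip G x (y - y') = ip G x y - ip G x y'"
  by (simp add: ip_inner inner_diff_right matrix_vector_mult_diff_distrib)
lemma ip_scale1: "ip G (c *\<^sub>R x) y = c * ip G x y"
  by (simp add: ip_inner)
lemma ip_scale2: "ip G x (c *\<^sub>R y) = c * ip G x y"
  by (simp add: ip_def algebra_simps sum_distrib_left)
lemma ip_zero1: "ip G 0 y = 0" by (simp add: ip_def)
lemma ip_zero2: "ip G x 0 = 0" by (simp add: ip_def)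

lemma ip_sym: "transpose G = G \<Longrightarrow> ip G x y = ip G y x"
proof -
  assume a: "transpose G = G"
  have g: "G$i$j = G$j$i" for i j
  proof -
    have "transpose G $ i $ j = G $ i $ j" using a by simp
    then show ?thesis by (simp add: transpose_def)
  qed
  show ?thesis unfolding ip_def
    apply (subst sum.swap)
    by (simp add: g ac_simps)
qed

lemma inner_mv: "inner (A *v u) w = inner u (transpose A *v (w::real^_))"
  by (metis dot_lmul_matrix inner_commute transpose_matrix_vector)

lemma ip_congr: "ip G (A *v u) (A *v v) = ip (transpose A ** G ** A) u v"
  by (simp add: ip_inner inner_mv matrix_vector_mul_assoc matrix_mul_assoc)

lemma tens_add1: "tens T (x + x') y z w = tens T x y z w + tens T x' y z w"
  by (simp add: tens_def algebra_simps sum.distrib)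
lemma tens_add2: "tens T x (y + y') z w = tens T x y z w + tens T x y' z w"
  by (simp add: tens_def algebra_simps sum.distrib)
lemma tens_add3: "tens T x y (z + z') w = tens T x y z w + tens T x y z' w"
  by (simp add: tens_def algebra_simps sum.distrib)
lemma tens_add4: "tens T x y z (w + w') = tens T x y z w + tens T x y z w'"
  by (simp add: tens_def algebra_simps sum.distrib)
lemma tens_scale1: "tens T (c *\<^sub>R x) y z w = c * tens T x y z w"
  by (simp add: tens_def algebra_simps sum_distrib_left)
lemma tens_scale2: "tens T x (c *\<^sub>R y) z w = c * tens T x y z w"
  by (simp add: tens_def algebra_simps sum_distrib_left)
lemma tens_scale3: "tens T x y (c *\<^sub>R z) w = c * tens T x y z w"
  by (simp add: tens_def algebra_simps sum_distrib_left)
lemma tens_scale4: "tens T x y z (c *\<^sub>R w) = c * tens T x y z w"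
  by (simp add: tens_def algebra_simps sum_distrib_left)
lemma tens_diff1: "tens T (x - x') y z w = tens T x y z w - tens T x' y z w"
  by (simp add: tens_def algebra_simps sum_subtractf)
lemma tens_diff2: "tens T x (y - y') z w = tens T x y z w - tens T x y' z w"
  by (simp add: tens_def algebra_simps sum_subtractf)
lemma tens_diff3: "tens T x y (z - z') w = tens T x y z w - tens T x y z' w"
  by (simp add: tens_def algebra_simps sum_subtractf)
lemma tens_diff4: "tens T x y z (w - w') = tens T x y z w - tens T x y z w'"
  by (simp add: tens_def algebra_simps sum_subtractf)

lemma sum3_rot: "(\<Sum>j\<in>A. \<Sum>k\<in>B. \<Sum>l\<in>C. g j k l) = (\<Sum>l\<in>C. \<Sum>j\<in>A. \<Sum>k\<in>B. g j k l)"
proof -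
  have "(\<Sum>j\<in>A. \<Sum>k\<in>B. \<Sum>l\<in>C. g j k l) = (\<Sum>j\<in>A. \<Sum>l\<in>C. \<Sum>k\<in>B. g j k l)"
    by (rule sum.cong[OF refl], rule sum.swap)
  also have "\<dots> = (\<Sum>l\<in>C. \<Sum>j\<in>A. \<Sum>k\<in>B. g j k l)" by (rule sum.swap)
  finally show ?thesis .
qed

lemma tens_M: "tens T u y y v = ip (\<chi> k j. \<Sum>a\<in>UNIV. \<Sum>b\<in>UNIV. T k a b j * y$a * y$b) u v"
  unfolding tens_def ip_def
proof (rule sum.cong[OF refl])
  fix i
  have "(\<Sum>j\<in>UNIV. \<Sum>k\<in>UNIV. \<Sum>l\<in>UNIV. T i j k l * u $ i * y $ j * y $ k * v $ l)
     = (\<Sum>l\<in>UNIV. \<Sum>j\<in>UNIV. \<Sum>k\<in>UNIV. T i j k l * u $ i * y $ j * y $ k * v $ l)"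
    by (rule sum3_rot)
  also have "\<dots> = (\<Sum>l\<in>UNIV. (\<Sum>a\<in>UNIV. \<Sum>b\<in>UNIV. T i a b l * y$a * y$b) * u $ i * v $ l)"
    apply (rule sum.cong[OF refl])
    apply (simp only: sum_distrib_right)
    apply (rule sum.cong[OF refl])+
    by (simp add: mult_ac)
  finally show "(\<Sum>j\<in>UNIV. \<Sum>k\<in>UNIV. \<Sum>l\<in>UNIV. T i j k l * u $ i * y $ j * y $ k * v $ l)
     = (\<Sum>j\<in>UNIV. (\<chi> k j. \<Sum>a\<in>UNIV. \<Sum>b\<in>UNIV. T k a b j * y$a * y$b) $ i $ j * u $ i * v $ j)"
    by simp
qed



definition Dm :: "'n::finite \<Rightarrow> real^'n^'n" where
  "Dm i0 = (\<chi> i j. if i = j then (if i = i0 then -1 else 1) else 0)"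

definition frame :: "real^'n::finite^'n \<Rightarrow> 'n \<Rightarrow> ('n \<Rightarrow> real^'n) \<Rightarrow> bool" where
  "frame G i0 p \<longleftrightarrow> (\<forall>a b. ip G (p a) (p b) = (if a = b then (if a = i0 then -1 else 1) else 0))"

definition Pm :: "('n::finite \<Rightarrow> real^'n) \<Rightarrow> real^'n^'n" where
  "Pm p = (\<chi> k a. p a $ k)"

lemma Pm_axis: "Pm p *v axis a 1 = p a"
  by (simp add: Pm_def matrix_vector_mult_def axis_def vec_eq_iff if_distrib cong: if_cong)

lemma Pm_vec: "Pm p *v c = (\<Sum>a\<in>UNIV. c$a *\<^sub>R p a)"
  unfolding vec_eq_iff
proof
  fix k
  have "(Pm p *v c) $ k = (\<Sum>a\<in>UNIV. p a $ k * c $ a)" by (simp add: Pm_def matrix_vector_mult_def)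
  also have "\<dots> = (\<Sum>a\<in>UNIV. c$a *\<^sub>R p a) $ k" by (simp add: sum_component mult.commute)
  finally show "(Pm p *v c) $ k = (\<Sum>a\<in>UNIV. c$a *\<^sub>R p a) $ k" .
qed

lemma mv_axis: "(A *v axis b 1) $ a = A$a$(b::'n::finite)"
proof -
  have "(A *v axis b 1) $ a = (\<Sum>j\<in>UNIV. A$a$j * (if j = b then 1 else 0))"
    by (simp add: matrix_vector_mult_def axis_def)
  also have "\<dots> = (\<Sum>j\<in>UNIV. if j = b then A$a$j else 0)" by (rule sum.cong) auto
  finally show ?thesis by simp
qed

lemma ip_axis: "ip A (axis a 1) (axis b 1) = A$a$b"
  by (simp add: ip_inner mv_axis inner_axis')

lemma P_frame: "transpose P ** G ** P = Dm i0 \<Longrightarrow> frame G i0 (\<lambda>a. P *v axis a 1)"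
  unfolding frame_def
  by (simp add: ip_congr ip_axis Dm_def)

lemma frame_P: "frame G i0 p \<Longrightarrow> transpose (Pm p) ** G ** Pm p = Dm i0"
proof -
  assume f: "frame G i0 p"
  have "(transpose (Pm p) ** G ** Pm p) $ a $ b = Dm i0 $ a $ b" for a b
  proof -
    have "(transpose (Pm p) ** G ** Pm p) $ a $ b = ip (transpose (Pm p) ** G ** Pm p) (axis a 1) (axis b 1)"
      by (simp add: ip_axis)
    also have "\<dots> = ip G (p a) (p b)" by (simp add: ip_congr[symmetric] Pm_axis)
    finally show ?thesis using f by (simp add: frame_def Dm_def)
  qed
  then show ?thesis by (simp add: vec_eq_iff)
qed

lemma Dm_sq: "Dm i0 ** Dm i0 = mat 1"
proof -
  have "(Dm i0 ** Dm i0)$i$j = mat 1 $ i $ j" for i j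
  proof -
    have "(Dm i0 ** Dm i0)$i$j = (\<Sum>k\<in>UNIV. Dm i0 $ i $ k * Dm i0 $ k $ j)"
      by (simp add: matrix_matrix_mult_def)
    also have "\<dots> = (\<Sum>k\<in>UNIV. if k = i then (if i = j then 1 else 0) else 0)"
      by (rule sum.cong) (auto simp: Dm_def)
    also have "\<dots> = mat 1 $ i $ j" by (simp add: mat_def)
    finally show ?thesis .
  qed
  then show ?thesis by (simp add: vec_eq_iff)
qed

lemma Dm_tr: "transpose (Dm i0) = Dm i0"
  by (simp add: Dm_def transpose_def vec_eq_iff)

lemma frame_inv:
  assumes "frame G i0 p"
  shows "(Pm p ** Dm i0 ** transpose (Pm p)) ** G = mat 1"
proof -
  have "(transpose (Pm p) ** G) ** (Pm p ** Dm i0) = (transpose (Pm p) ** G ** Pm p) ** Dm i0"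
    by (simp add: matrix_mul_assoc)
  also have "\<dots> = mat 1" using frame_P[OF assms] Dm_sq by simp
  finally have "(transpose (Pm p) ** G) ** (Pm p ** Dm i0) = mat 1" .
  then have "(Pm p ** Dm i0) ** (transpose (Pm p) ** G) = mat 1"
    by (subst matrix_left_right_inverse)
  then show ?thesis by (simp add: matrix_mul_assoc)
qed

lemma frame_span:
  assumes "frame G i0 p"
  shows "z = Pm p *v ((Dm i0 ** transpose (Pm p) ** G) *v z)"
proof -
  have "z = ((Pm p ** Dm i0 ** transpose (Pm p)) ** G) *v z" using frame_inv[OF assms] by simp
  then show ?thesis by (simp add: matrix_vector_mul_assoc matrix_mul_assoc)
qed

lemma frame_ex: "frame G i0 p \<Longrightarrow> \<exists>c. z = Pm p *v c"
  using frame_span by (rule exI)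

lemma frame_ip: "frame G i0 p \<Longrightarrow> ip G (Pm p *v c) (Pm p *v d) = ip (Dm i0) c d"
  by (simp add: ip_congr frame_P)

definition sp :: "'n::finite \<Rightarrow> real^'n \<Rightarrow> real^'n" where
  "sp i0 z = (\<chi> a. if a = i0 then 0 else z$a)"

lemma ipD: "ip (Dm i0) c d = inner (sp i0 c) (sp i0 d) - c$i0 * d$i0"
proof -
  have "ip (Dm i0) c d = (\<Sum>i\<in>UNIV. \<Sum>j\<in>UNIV. Dm i0 $ i $ j * c $ i * d $ j)" by (simp add: ip_def)
  also have "\<dots> = (\<Sum>i\<in>UNIV. (if i = i0 then 0 else c$i * d$i) - (if i = i0 then c$i * d$i else 0))"
  proof (rule sum.cong[OF refl])
    fix i
    have "(\<Sum>j\<in>UNIV. Dm i0 $ i $ j * c $ i * d $ j) = (\<Sum>j\<in>UNIV. if j = i then Dm i0 $ i $ i * c $ i * d $ i else 0)"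
      by (rule sum.cong) (auto simp: Dm_def)
    also have "\<dots> = Dm i0 $ i $ i * c $ i * d $ i" by simp
    also have "\<dots> = (if i = i0 then 0 else c$i * d$i) - (if i = i0 then c$i * d$i else 0)"
      by (simp add: Dm_def)
    finally show "(\<Sum>j\<in>UNIV. Dm i0 $ i $ j * c $ i * d $ j) = (if i = i0 then 0 else c$i * d$i) - (if i = i0 then c$i * d$i else 0)" .
  qed
  also have "\<dots> = (\<Sum>i\<in>UNIV. (if i = i0 then 0 else c$i * d$i)) - c$i0 * d$i0"
    by (simp add: sum_subtractf)
  also have "(\<Sum>i\<in>UNIV. (if i = i0 then 0 else c$i * d$i)) = inner (sp i0 c) (sp i0 d)"
    unfolding inner_vec_def by (rule sum.cong) (auto simp: sp_def)
  finally show ?thesis .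
qed

lemma sp_zero: "sp i0 z = 0 \<Longrightarrow> z$i0 = 0 \<Longrightarrow> z = 0"
proof -
  assume a: "sp i0 z = 0" "z$i0 = 0"
  have "z$b = 0" for b
  proof (cases "b = i0")
    case True then show ?thesis using a by simp
  next
    case False
    have "(sp i0 z)$b = 0" using a by simp
    then show ?thesis using False by (simp add: sp_def)
  qed
  then show ?thesis by (simp add: vec_eq_iff)
qed

lemma timelike_perp_coef:
  assumes t: "ip (Dm i0) t t < 0" and o: "ip (Dm i0) t z = 0"
  shows "ip (Dm i0) z z \<ge> 0 \<and> (ip (Dm i0) z z = 0 \<longrightarrow> z = 0)"
proof -
  define A where "A = inner (sp i0 t) (sp i0 t)"
  define Z where "Z = inner (sp i0 z) (sp i0 z)"
  define X where "X = inner (sp i0 t) (sp i0 z)"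
  have A0: "A \<ge> 0" "Z \<ge> 0" unfolding A_def Z_def by auto
  have cs: "X^2 \<le> A * Z" unfolding X_def A_def Z_def by (rule Cauchy_Schwarz_ineq)
  have t': "A < (t$i0)^2" using t by (simp add: ipD A_def power2_eq_square)
  have o': "X = t$i0 * z$i0" using o by (simp add: ipD X_def)
  have zz: "ip (Dm i0) z z = Z - (z$i0)^2" by (simp add: ipD Z_def power2_eq_square)
  have g: "Z \<ge> (z$i0)^2"
  proof (rule ccontr)
    assume "\<not> ?thesis"
    then have h: "Z < (z$i0)^2" by simp
    have "(t$i0)^2 * (z$i0)^2 \<le> A * Z" using cs o' by (simp add: power_mult_distrib)
    moreover have "A * Z < (t$i0)^2 * (z$i0)^2"
    proof (cases "A = 0")
      case True
      have "(t$i0)^2 > 0" using t' True by simp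
      moreover have "(z$i0)^2 > 0" using h A0 by linarith
      ultimately show ?thesis using True by (simp add: mult_pos_pos)
    next
      case False
      then have "A > 0" using A0 by simp
      then have "A * Z < A * (z$i0)^2" using h by simp
      also have "\<dots> \<le> (t$i0)^2 * (z$i0)^2" using t' by (simp add: mult_right_mono)
      finally show ?thesis .
    qed
    ultimately show False by simp
  qed
  moreover have "ip (Dm i0) z z = 0 \<longrightarrow> z = 0"
  proof
    assume "ip (Dm i0) z z = 0"
    then have e: "Z = (z$i0)^2" using zz by simp
    have "(t$i0)^2 * (z$i0)^2 \<le> A * (z$i0)^2" using cs o' e by (simp add: power_mult_distrib)
    have "(z$i0)^2 = 0"
    proof (rule ccontr)
      assume "(z$i0)^2 \<noteq> 0"
      then have "(z$i0)^2 > 0" by simp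
      then have "A * (z$i0)^2 < (t$i0)^2 * (z$i0)^2" using t' by (rule mult_strict_right_mono[rotated])
      then show False using \<open>(t$i0)^2 * (z$i0)^2 \<le> A * (z$i0)^2\<close> by simp
    qed
    then have "z$i0 = 0" "Z = 0" using e by auto
    then show "z = 0" using sp_zero[of i0 z] unfolding Z_def by simp
  qed
  ultimately show ?thesis using zz by simp
qed

lemma frame_timelike_perp:
  assumes f: "frame G i0 p" and t: "ip G \<tau> \<tau> < 0" and o: "ip G \<tau> z = 0"
  shows "ip G z z \<ge> 0 \<and> (ip G z z = 0 \<longrightarrow> z = 0)"
proof -
  obtain a where a: "\<tau> = Pm p *v a" using frame_ex[OF f] by blast
  obtain b where b: "z = Pm p *v b" using frame_ex[OF f] by blast
  have "ip (Dm i0) b b \<ge> 0 \<and> (ip (Dm i0) b b = 0 \<longrightarrow> b = 0)"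
    using timelike_perp_coef[of i0 a b] t o a b frame_ip[OF f] by simp
  then show ?thesis using a b frame_ip[OF f] by auto
qed



lemma cA: "algebraic_curvature_tensor T \<Longrightarrow> tens T x y z w = - tens T y x z w"
  unfolding algebraic_curvature_tensor_def by blast
lemma cP: "algebraic_curvature_tensor T \<Longrightarrow> tens T x y z w = tens T z w x y"
  unfolding algebraic_curvature_tensor_def by blast
lemma cB: "algebraic_curvature_tensor T \<Longrightarrow> tens T x y z w + tens T y z x w + tens T z x y w = 0"
  unfolding algebraic_curvature_tensor_def by blast
lemma cC: "algebraic_curvature_tensor T \<Longrightarrow> tens T x y z w = - tens T x y w z"
proof -
  assume a: "algebraic_curvature_tensor T"
  have "tens T x y z w = tens T z w x y" using cP[OF a] .
  also have "\<dots> = - tens T w z x y" using cA[OF a] .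
  also have "tens T w z x y = tens T x y w z" using cP[OF a] .
  finally show ?thesis .
qed
lemma c_xx: "algebraic_curvature_tensor T \<Longrightarrow> tens T x x z w = 0"
  using cA[of T x x z w] by simp
lemma c_zz: "algebraic_curvature_tensor T \<Longrightarrow> tens T x y z z = 0"
  using cC[of T x y z z] by simp

lemma curv_zero:
  fixes S :: "'v::real_vector \<Rightarrow> 'v \<Rightarrow> 'v \<Rightarrow> 'v \<Rightarrow> real"
  assumes a12: "\<And>x y z w. S x y z w = - S y x z w"
  and ps: "\<And>x y z w. S x y z w = S z w x y"
  and bi: "\<And>x y z w. S x y z w + S y z x w + S z x y w = 0"
  and ad1: "\<And>x x' y z w. S (x+x') y z w = S x y z w + S x' y z w"
  and ad2: "\<And>x y y' z w. S x (y+y') z w = S x y z w + S x y' z w"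
  and ad3: "\<And>x y z z' w. S x y (z+z') w = S x y z w + S x y z' w"
  and ad4: "\<And>x y z w w'. S x y z (w+w') = S x y z w + S x y z w'"
  and z: "\<And>x w. S w x x w = 0"
  shows "S x y z w = 0"
proof -
  have a34: "S x y z w = - S x y w z" for x y z w
  proof -
    have "S x y z w = S z w x y" using ps .
    also have "\<dots> = - S w z x y" using a12 .
    also have "S w z x y = S x y w z" using ps .
    finally show ?thesis .
  qed
  have s1: "S w x y w = 0" for w x y
  proof -
    have "S w (x+y) (x+y) w = S w x x w + S w x y w + S w y x w + S w y y w"
      by (simp add: ad2 ad3)
    moreover have "S w y x w = S w x y w"
    proof -
      have "S w y x w = S x w w y" using ps .
      also have "\<dots> = - S w x w y" using a12 .
      also have "S w x w y = - S w x y w" using a34 .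
      finally show ?thesis by simp
    qed
    ultimately show ?thesis using z by simp
  qed
  have s2: "S v x y w = - S w x y v" for v x y w
  proof -
    have "S (w+v) x y (w+v) = S w x y w + S w x y v + S v x y w + S v x y v"
      by (simp add: ad1 ad4)
    then show ?thesis using s1 by simp
  qed
  have e1: "S y z x w = S x y z w"
  proof -
    have "S y z x w = - S w z x y" by (rule s2)
    also have "S w z x y = - S z w x y" using a12 .
    also have "S z w x y = S x y z w" using ps .
    finally show ?thesis by simp
  qed
  have e2: "S z x y w = S x y z w"
  proof -
    have "S z x y w = - S w x y z" by (rule s2)
    also have "\<dots> = S x w y z" using a12[of w x y z] by simp
    also have "\<dots> = - S z w y x" by (rule s2)
    also have "\<dots> = S w z y x" using a12[of w z y x] by simp
    also have "\<dots> = S y x w z" by (rule ps)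
    also have "\<dots> = - S x y w z" by (rule a12)
    also have "\<dots> = S x y z w" using a34[of x y z w] by simp
    finally show ?thesis .
  qed
  show ?thesis using bi[of x y z w] e1 e2 by simp
qed

lemma tens_quad: "tens T w (a *\<^sub>R u + b *\<^sub>R v) (a *\<^sub>R u + b *\<^sub>R v) w
   = a^2 * tens T w u u w + a*b*(tens T w u v w + tens T w v u w) + b^2 * tens T w v v w"
  by (simp add: tens_add2 tens_add3 tens_scale2 tens_scale3 power2_eq_square algebra_simps)

lemma ip_quad: "ip G (a *\<^sub>R u + b *\<^sub>R v) (a *\<^sub>R u + b *\<^sub>R v)
   = a^2 * ip G u u + a*b*(ip G u v + ip G v u) + b^2 * ip G v v"
  by (simp add: ip_add1 ip_add2 ip_scale1 ip_scale2 power2_eq_square algebra_simps)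

lemma ip_lin1: "ip G (a *\<^sub>R u + b *\<^sub>R v) w = a * ip G u w + b * ip G v w"
  by (simp add: ip_add1 ip_scale1)



lemma tens_zero2: "tens T x 0 z w = 0" by (simp add: tens_def)
lemma tens_zero3: "tens T x y 0 w = 0" by (simp add: tens_def)

lemma tens_quad14: "tens T (a *\<^sub>R u + b *\<^sub>R v) x x (a *\<^sub>R u + b *\<^sub>R v)
   = a^2 * tens T u x x u + a*b*(tens T u x x v + tens T v x x u) + b^2 * tens T v x x v"
  by (simp add: tens_add1 tens_add4 tens_scale1 tens_scale4 power2_eq_square algebra_simps)

lemma LK:
  assumes f: "frame G i0 p" and Gs: "transpose G = G" and act: "algebraic_curvature_tensor T"
  and H: "\<And>x w. ip G x x = 0 \<Longrightarrow> ip G x w = 0 \<Longrightarrow> tens T w x x w = 0"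
  and t: "ip G \<tau> \<tau> < 0" and tw: "ip G \<tau> w = 0" and xw: "ip G x w = 0"
  shows "tens T w x x w * ip G \<tau> \<tau> = tens T w \<tau> \<tau> w * ip G x x"
proof -
  have sym: "\<And>u v. ip G u v = ip G v u" using ip_sym[OF Gs] by blast
  define a where "a = ip G x \<tau> / ip G \<tau> \<tau>"
  define x' where "x' = x - a *\<^sub>R \<tau>"
  have xeq: "x = a *\<^sub>R \<tau> + 1 *\<^sub>R x'" by (simp add: x'_def)
  have x't: "ip G \<tau> x' = 0" unfolding x'_def using t
    by (simp add: ip_diff2 ip_scale2 a_def sym[of \<tau> x])
  have x't2: "ip G x' \<tau> = 0" using x't sym by simp
  have x'w: "ip G x' w = 0" unfolding x'_def by (simp add: ip_diff1 ip_scale1 xw tw)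
  have pos: "ip G x' x' \<ge> 0" and z0: "ip G x' x' = 0 \<longrightarrow> x' = 0"
    using frame_timelike_perp[OF f t x't] by auto
  define q where "q = - ip G \<tau> \<tau>"
  have q: "q > 0" using t q_def by simp
  define r where "r = sqrt (ip G x' x' / q)"
  have r2: "r^2 = ip G x' x' / q" unfolding r_def using pos q by simp
  have r2q: "r^2 * ip G \<tau> \<tau> = - ip G x' x'" using r2 q unfolding q_def by (simp add: field_simps)
  define \<beta> where "\<beta> = tens T w \<tau> x' w + tens T w x' \<tau> w"
  have n1: "ip G (r *\<^sub>R \<tau> + 1 *\<^sub>R x') (r *\<^sub>R \<tau> + 1 *\<^sub>R x') = 0"
    by (simp only: ip_quad) (simp add: x't x't2 r2q)
  have n2: "ip G (r *\<^sub>R \<tau> + (-1) *\<^sub>R x') (r *\<^sub>R \<tau> + (-1) *\<^sub>R x') = 0"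
    by (simp only: ip_quad) (simp add: x't x't2 r2q)
  have w1: "ip G (r *\<^sub>R \<tau> + 1 *\<^sub>R x') w = 0" by (simp only: ip_lin1) (simp add: tw x'w)
  have w2: "ip G (r *\<^sub>R \<tau> + (-1) *\<^sub>R x') w = 0" by (simp only: ip_lin1) (simp add: tw x'w)
  have e1: "r^2 * tens T w \<tau> \<tau> w + r * \<beta> + tens T w x' x' w = 0"
    using H[OF n1 w1] by (simp only: tens_quad) (simp add: \<beta>_def)
  have e2: "r^2 * tens T w \<tau> \<tau> w - r * \<beta> + tens T w x' x' w = 0"
    using H[OF n2 w2] by (simp only: tens_quad) (simp add: \<beta>_def)
  have b0: "\<beta> = 0"
  proof (cases "r = 0")
    case True
    then have "ip G x' x' = 0" using r2 q by simp
    then have "x' = 0" using z0 by simp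
    then show ?thesis by (simp add: \<beta>_def tens_zero2 tens_zero3)
  next
    case False
    have "2 * (r * \<beta>) = 0" using e1 e2 by linarith
    then show ?thesis using False by simp
  qed
  have Fx': "tens T w x' x' w = (-1) * (r^2 * tens T w \<tau> \<tau> w)" using e1 b0 by simp
  have Fx: "tens T w x x w = a^2 * tens T w \<tau> \<tau> w + a * \<beta> + tens T w x' x' w"
    by (subst (1 2) xeq, simp only: tens_quad) (simp add: \<beta>_def)
  have Qx: "ip G x x = a^2 * ip G \<tau> \<tau> + ip G x' x'"
    by (subst (1 2) xeq, simp only: ip_quad) (simp add: x't x't2)
  have h: "ip G \<tau> \<tau> * (r^2 * tens T w \<tau> \<tau> w) = (r^2 * ip G \<tau> \<tau>) * tens T w \<tau> \<tau> w"
    by (simp add: ac_simps)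
  show ?thesis
    unfolding Fx Qx b0 Fx'
    using h unfolding r2q by (simp add: algebra_simps)
qed

lemma LK2:
  assumes f: "frame G i0 p" and Gs: "transpose G = G" and act: "algebraic_curvature_tensor T"
  and H: "\<And>x w. ip G x x = 0 \<Longrightarrow> ip G x w = 0 \<Longrightarrow> tens T w x x w = 0"
  and w: "ip G w w > 0" and t: "ip G \<tau> \<tau> < 0" and tw: "ip G \<tau> w = 0"
  shows "tens T w x x w * ip G \<tau> \<tau> * ip G w w
     = tens T w \<tau> \<tau> w * (ip G x x * ip G w w - (ip G x w)^2)"
proof -
  have sym: "\<And>u v. ip G u v = ip G v u" using ip_sym[OF Gs] by blast
  define k where "k = ip G x w / ip G w w"
  define x' where "x' = 1 *\<^sub>R x + (-k) *\<^sub>R w"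
  have "ip G x' w = ip G x w - k * ip G w w" unfolding x'_def ip_lin1 by simp
  then have x'w: "ip G x' w = 0" unfolding k_def using w by simp
  have L: "tens T w x' x' w * ip G \<tau> \<tau> = tens T w \<tau> \<tau> w * ip G x' x'"
    using LK[OF f Gs act H t tw x'w] .
  have F: "tens T w x' x' w = tens T w x x w"
    unfolding x'_def tens_quad by (simp add: c_xx[OF act] c_zz[OF act])
  have Q: "ip G x' x' * ip G w w = ip G x x * ip G w w - (ip G x w)^2"
    unfolding x'_def ip_quad using w by (simp add: sym[of w x] k_def power2_eq_square field_simps)
  show ?thesis
    using L F Q by (metis mult.assoc)
qed

definition tauw :: "real^'n::finite^'n \<Rightarrow> real^'n \<Rightarrow> real^'n \<Rightarrow> real^'n" where
  "tauw G e w = ip G w w *\<^sub>R e + (- ip G e w) *\<^sub>R w"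

lemma LK3:
  assumes Gs: "transpose G = G" and e: "ip G e e = -1" and w: "ip G w w > 0"
  shows "ip G (tauw G e w) w = 0" "ip G (tauw G e w) (tauw G e w) < 0"
proof -
  have sym: "\<And>u v. ip G u v = ip G v u" using ip_sym[OF Gs] by blast
  show "ip G (tauw G e w) w = 0" unfolding tauw_def by (simp only: ip_lin1) simp
  have "ip G (tauw G e w) (tauw G e w) = -(ip G w w * ip G w w) - ip G w w * (ip G e w * ip G e w)"
    unfolding tauw_def by (simp only: ip_quad) (simp add: e sym[of w e] power2_eq_square algebra_simps)
  also have "\<dots> < 0"
  proof -
    have "ip G w w * (ip G e w * ip G e w) \<ge> 0" using w by simp
    moreover have "ip G w w * ip G w w > 0" using w by simp
    ultimately show ?thesis by linarith
  qed
  finally show "ip G (tauw G e w) (tauw G e w) < 0" .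
qed



lemma big_t:
  fixes t q0 b :: real
  assumes "t \<ge> \<bar>q0\<bar> + 2*\<bar>b\<bar> + 1"
  shows "q0 + t*(b+b) + t^2 > 0"
proof -
  have t1: "t \<ge> 1" using assms by simp
  have h1: "t*t \<ge> t*(\<bar>q0\<bar> + 2*\<bar>b\<bar> + 1)" using assms t1 by (intro mult_left_mono) auto
  have h2: "t*\<bar>q0\<bar> \<ge> \<bar>q0\<bar>" using t1 mult_right_mono[of 1 t "\<bar>q0\<bar>"] by simp
  have h3: "t*\<bar>b\<bar> \<ge> -(t*b)" using t1 mult_left_mono[of "-b" "\<bar>b\<bar>" t] by simp
  have h4: "\<bar>q0\<bar> \<ge> -q0" by simp
  show ?thesis using h1 h2 h3 h4 t1 by (simp add: power2_eq_square algebra_simps)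
qed

lemma partB:
  assumes f: "frame G i0 p" and Gs: "transpose G = G" and act: "algebraic_curvature_tensor T"
  and i1: "i1 \<noteq> i0" and i2: "i2 \<noteq> i0" "i2 \<noteq> i1"
  and H: "\<And>x w. ip G x x = 0 \<Longrightarrow> ip G x w = 0 \<Longrightarrow> tens T w x x w = 0"
  shows "\<exists>c. \<forall>x y z w. tens T x y z w = c * (ip G x w * ip G y z - ip G x z * ip G y w)"
proof -
  have sym: "\<And>u v. ip G u v = ip G v u" using ip_sym[OF Gs] by blast
  have fr: "\<And>a b. ip G (p a) (p b) = (if a = b then (if a = i0 then -1 else 1) else 0)"
    using f unfolding frame_def by blast
  have e0: "ip G (p i0) (p i0) = -1" using fr by simp
  define \<mu> where "\<mu> w = tens T w (tauw G (p i0) w) (tauw G (p i0) w) w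
      / (ip G (tauw G (p i0) w) (tauw G (p i0) w) * ip G w w)" for w
  have M: "tens T w x x w = \<mu> w * (ip G x x * ip G w w - (ip G x w)^2)" if w: "ip G w w > 0" for w x
  proof -
    have tw: "ip G (tauw G (p i0) w) w = 0" and t: "ip G (tauw G (p i0) w) (tauw G (p i0) w) < 0"
      using LK3[OF Gs e0 w] by auto
    have L: "tens T w x x w * ip G (tauw G (p i0) w) (tauw G (p i0) w) * ip G w w
      = tens T w (tauw G (p i0) w) (tauw G (p i0) w) w * (ip G x x * ip G w w - (ip G x w)^2)"
      using LK2[OF f Gs act H w t tw] .
    have nz: "ip G (tauw G (p i0) w) (tauw G (p i0) w) * ip G w w \<noteq> 0" using t w by simp
    show ?thesis unfolding \<mu>_def using L nz by (simp add: field_simps)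
  qed
  have C: "\<mu> u = \<mu> v" if u: "ip G u u > 0" and v: "ip G v v > 0"
     and nz: "ip G u u * ip G v v - (ip G u v)^2 \<noteq> 0" for u v
  proof -
    have 1: "tens T u v v u = \<mu> u * (ip G v v * ip G u u - (ip G v u)^2)" using M[OF u] .
    have 2: "tens T v u u v = \<mu> v * (ip G u u * ip G v v - (ip G u v)^2)" using M[OF v] .
    have 3: "tens T u v v u = tens T v u u v" using cP[OF act] .
    have A: "tens T u v v u = \<mu> u * (ip G u u * ip G v v - (ip G u v)^2)"
      using 1 sym[of v u] by (simp add: mult.commute)
    have B: "tens T u v v u = \<mu> v * (ip G u u * ip G v v - (ip G u v)^2)"
      using 2 3 by simp
    have "\<mu> u * (ip G u u * ip G v v - (ip G u v)^2) = \<mu> v * (ip G u u * ip G v v - (ip G u v)^2)"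
      using A B by linarith
    then show ?thesis using nz mult_right_cancel by blast
  qed
  define c where "c = \<mu> (p i1)"
  define s where "s = p i1 + p i2"
  have q1: "ip G (p i1) (p i1) = 1" using fr i1 by simp
  have q2: "ip G (p i2) (p i2) = 1" using fr i2 by simp
  have q12: "ip G (p i1) (p i2) = 0" using fr i2 by simp
  have q21: "ip G (p i2) (p i1) = 0" using fr i2 by simp
  have qs: "ip G s s = 2" unfolding s_def by (simp add: ip_add1 ip_add2 q1 q2 q12 q21)
  have q1s: "ip G (p i1) s = 1" unfolding s_def by (simp add: ip_add2 q1 q12)
  have c2: "\<mu> (p i2) = c" unfolding c_def by (rule C) (simp_all add: q1 q2 q21)
  have cs: "\<mu> s = c" unfolding c_def by (rule C) (simp_all add: q1 qs q1s sym[of s "p i1"])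
  have allw: "\<mu> w = c" if w: "ip G w w > 0" for w
  proof -
    define b1 where "b1 = ip G w (p i1)"
    define b2 where "b2 = ip G w (p i2)"
    have bs: "ip G w s = b1 + b2" unfolding s_def b1_def b2_def by (simp add: ip_add2)
    show ?thesis
    proof (cases "ip G w w * 1 - b1^2 = 0")
      case False
      then show ?thesis unfolding c_def by (intro C) (simp_all add: w q1 b1_def)
    next
      case T1: True
      show ?thesis
      proof (cases "ip G w w * 1 - b2^2 = 0")
        case False
        then have "\<mu> w = \<mu> (p i2)" by (intro C) (simp_all add: w q2 b2_def)
        then show ?thesis using c2 by simp
      next
        case T2: True
        show ?thesis
        proof (cases "ip G w w * 2 - (b1 + b2)^2 = 0")
          case False
          then have "\<mu> w = \<mu> s" by (intro C) (simp_all add: w qs bs)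
          then show ?thesis using cs by simp
        next
          case True
          have "2 * (b1 * b2) = 0" using T1 T2 True by (simp add: power2_eq_square algebra_simps)
          then have "b1 = 0 \<or> b2 = 0" by simp
          then have "ip G w w = 0" using T1 T2 by auto
          then show ?thesis using w by simp
        qed
      qed
    qed
  qed
  have sp: "tens T w x x w = c * (ip G x x * ip G w w - (ip G x w)^2)" if w: "ip G w w > 0" for w x
    using M[OF w] allw[OF w] by simp
  have all: "tens T w x x w = c * (ip G x x * ip G w w - (ip G w x)^2)" for x w
  proof -
    define e where "e = p i1"
    define g where "g v = tens T v x x v - c * (ip G x x * ip G v v - (ip G v x)^2)" for v
    define \<alpha> where "\<alpha> = tens T w x x e + tens T e x x w - c * (ip G x x * (ip G w e + ip G e w) - 2 * ip G w x * ip G e x)"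
    define \<gamma> where "\<gamma> = tens T e x x e - c * (ip G x x * ip G e e - (ip G e x)^2)"
    have gexp: "g (1 *\<^sub>R w + t *\<^sub>R e) = g w + t * \<alpha> + t^2 * \<gamma>" for t
      unfolding g_def \<alpha>_def \<gamma>_def tens_quad14 ip_quad unfolding ip_lin1
      by (simp add: power2_eq_square algebra_simps)
    have g0: "g v = 0" if "ip G v v > 0" for v
      unfolding g_def using sp[OF that, of x] sym[of x v] by simp
    define T0 where "T0 = \<bar>ip G w w\<bar> + 2 * \<bar>ip G w e\<bar> + 1"
    have T0: "T0 > 0" unfolding T0_def by simp
    have spc: "ip G (1 *\<^sub>R w + t *\<^sub>R e) (1 *\<^sub>R w + t *\<^sub>R e) > 0" if "t \<ge> T0" for t
    proof -
      have "ip G (1 *\<^sub>R w + t *\<^sub>R e) (1 *\<^sub>R w + t *\<^sub>R e) = ip G w w + t * (ip G w e + ip G w e) + t^2"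
        unfolding ip_quad e_def using q1 sym[of "p i1" w] by simp
      also have "\<dots> > 0" using big_t[of "ip G w w" "ip G w e" t] that unfolding T0_def by simp
      finally show ?thesis .
    qed
    have z1: "g w + T0 * \<alpha> + T0^2 * \<gamma> = 0" using g0[OF spc[of T0]] gexp[of T0] by simp
    have z2: "g w + (2*T0) * \<alpha> + (2*T0)^2 * \<gamma> = 0" using g0[OF spc[of "2*T0"]] gexp[of "2*T0"] T0 by simp
    have z3: "g w + (3*T0) * \<alpha> + (3*T0)^2 * \<gamma> = 0" using g0[OF spc[of "3*T0"]] gexp[of "3*T0"] T0 by simp
    have "g w = 3 * (g w + T0 * \<alpha> + T0^2 * \<gamma>) - 3 * (g w + (2*T0) * \<alpha> + (2*T0)^2 * \<gamma>)
       + (g w + (3*T0) * \<alpha> + (3*T0)^2 * \<gamma>)"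
      by (simp add: power2_eq_square algebra_simps)
    then have "g w = 0" using z1 z2 z3 by simp
    then show ?thesis unfolding g_def by simp
  qed
  define S where "S x y z w = tens T x y z w - c * (ip G x w * ip G y z - ip G x z * ip G y w)" for x y z w
  have S0: "S x y z w = 0" for x y z w
  proof (rule curv_zero[where S = S])
    show "S x y z w = - S y x z w" for x y z w
      unfolding S_def using cA[OF act, of x y z w] by (simp add: algebra_simps)
    show "S x y z w = S z w x y" for x y z w
      unfolding S_def using cP[OF act, of x y z w] sym[of z y] sym[of w x] sym[of z x] sym[of w y]
      by (simp add: algebra_simps)
    show "S x y z w + S y z x w + S z x y w = 0" for x y z w
      unfolding S_def using cB[OF act, of x y z w] sym[of z x] sym[of y x] sym[of z y]
      by (simp add: algebra_simps)
    show "S (x+x') y z w = S x y z w + S x' y z w" for x x' y z w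
      unfolding S_def by (simp add: tens_add1 ip_add1 algebra_simps)
    show "S x (y+y') z w = S x y z w + S x y' z w" for x y y' z w
      unfolding S_def by (simp add: tens_add2 ip_add1 algebra_simps)
    show "S x y (z+z') w = S x y z w + S x y z' w" for x y z z' w
      unfolding S_def by (simp add: tens_add3 ip_add2 algebra_simps)
    show "S x y z (w+w') = S x y z w + S x y z w'" for x y z w w'
      unfolding S_def by (simp add: tens_add4 ip_add2 algebra_simps)
    show "S w x x w = 0" for x w
      unfolding S_def using all[of x w] all[of w x] sym[of x w] by (simp add: power2_eq_square algebra_simps)
  qed
  show ?thesis
    by (rule exI[of _ c]) (use S0 in \<open>simp add: S_def\<close>)
qed



definition cmat :: "real^'n::finite^'m::finite \<Rightarrow> complex^'n^'m" where
  "cmat A = (\<chi> i j. complex_of_real (A$i$j))"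
definition cvec :: "real^'n::finite \<Rightarrow> complex^'n" where
  "cvec v = (\<chi> i. complex_of_real (v$i))"
definition dotc :: "complex^'n::finite \<Rightarrow> complex^'n \<Rightarrow> complex" where
  "dotc u v = (\<Sum>i\<in>UNIV. u$i * v$i)"

lemma cmat_mul: "cmat (A ** B) = cmat A ** cmat B"
  by (simp add: cmat_def matrix_matrix_mult_def vec_eq_iff)

lemma cmat_transpose: "transpose (cmat A) = cmat (transpose A)"
  by (simp add: cmat_def transpose_def vec_eq_iff)

lemma cmat_one: "cmat (mat 1 :: real^'n::finite^'n) = mat 1"
  by (simp add: cmat_def mat_def vec_eq_iff)

lemma trace_cmat: "trace (cmat A) = complex_of_real (trace A)"
  by (simp add: cmat_def trace_def)

lemma dotc_mv: "dotc (A *v u) v = dotc u (transpose A *v v)"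
  unfolding dotc_def matrix_vector_mult_def transpose_def
  by (simp add: sum_distrib_left sum_distrib_right ac_simps) (rule sum.swap)

lemma dotc_axis: "dotc u (axis k 1) = u$k"
proof -
  have "dotc u (axis k 1) = (\<Sum>i\<in>UNIV. if i = k then u$i else 0)"
    unfolding dotc_def by (rule sum.cong) (auto simp: axis_def)
  then show ?thesis by simp
qed

lemma cip_dot: "cip G u v = dotc u (cmat G *v v)"
  unfolding cip_def dotc_def cmat_def matrix_vector_mult_def
  by (simp add: sum_distrib_left ac_simps)

definition Mmat :: "('n::finite \<Rightarrow> 'n \<Rightarrow> 'n \<Rightarrow> 'n \<Rightarrow> real) \<Rightarrow> real^'n \<Rightarrow> real^'n^'n" where
  "Mmat T y = (\<chi> k j. \<Sum>a\<in>UNIV. \<Sum>b\<in>UNIV. T k a b j * y$a * y$b)"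

lemma ctens_M: "ctens T u (cvec y) (cvec y) v = dotc u (cmat (Mmat T y) *v v)"
  unfolding ctens_def dotc_def
proof (rule sum.cong[OF refl])
  fix i
  have "(\<Sum>j\<in>UNIV. \<Sum>k\<in>UNIV. \<Sum>l\<in>UNIV. complex_of_real (T i j k l) * u $ i * cvec y $ j * cvec y $ k * v $ l)
     = (\<Sum>l\<in>UNIV. \<Sum>j\<in>UNIV. \<Sum>k\<in>UNIV. complex_of_real (T i j k l) * u $ i * cvec y $ j * cvec y $ k * v $ l)"
    by (rule sum3_rot)
  also have "\<dots> = u $ i * (cmat (Mmat T y) *v v) $ i"
    unfolding matrix_vector_mult_def cmat_def Mmat_def
    apply (simp add: sum_distrib_left)
    apply (rule sum.cong[OF refl])
    apply (simp only: sum_distrib_right sum_distrib_left)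
    apply (rule sum.cong[OF refl])+
    by (simp add: cvec_def mult_ac)
  finally show "(\<Sum>j\<in>UNIV. \<Sum>k\<in>UNIV. \<Sum>l\<in>UNIV. complex_of_real (T i j k l) * u $ i * cvec y $ j * cvec y $ k * v $ l)
     = u $ i * (cmat (Mmat T y) *v v) $ i" .
qed

lemma tens_Mmat: "tens T u y y v = ip (Mmat T y) u v"
  unfolding Mmat_def by (rule tens_M)



lemma cmat_mv_axis: "cmat A *v (cmat B *v v) = cmat (A ** B) *v v"
  by (simp add: cmat_mul matrix_vector_mul_assoc)

lemma jacobi_eq:
  assumes f: "frame G i0 p" and Gs: "transpose G = G"
  shows "jacobi G T (cvec y) = cmat ((Pm p ** Dm i0 ** transpose (Pm p)) ** transpose (Mmat T y))"
proof -
  define Gi where "Gi = Pm p ** Dm i0 ** transpose (Pm p)"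
  have GiG: "Gi ** G = mat 1" using frame_inv[OF f] unfolding Gi_def .
  have GGi: "G ** Gi = mat 1" using matrix_left_right_inverse1[OF GiG] .
  have Git: "transpose Gi = Gi"
    unfolding Gi_def by (simp add: matrix_transpose_mul Dm_tr matrix_mul_assoc)
  define J0 where "J0 = cmat (Gi ** transpose (Mmat T y))"
  have sat: "cip G (J0 *v a) b = ctens T a (cvec y) (cvec y) b" for a b
  proof -
    have "cip G (J0 *v a) b = dotc a (transpose J0 *v (cmat G *v b))"
      by (simp add: cip_dot dotc_mv)
    also have "transpose J0 *v (cmat G *v b) = cmat (Mmat T y ** Gi ** G) *v b"
      unfolding J0_def cmat_transpose cmat_mv_axis
      by (simp add: matrix_transpose_mul Git)
    also have "Mmat T y ** Gi ** G = Mmat T y"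
      by (simp add: GiG flip: matrix_mul_assoc)
    finally show ?thesis by (simp add: ctens_M)
  qed
  have uniq: "J = J0" if h: "\<forall>a b. cip G (J *v a) b = ctens T a (cvec y) (cvec y) b" for J
  proof -
    have "J *v a = J0 *v a" for a
    proof -
      have "(J *v a) $ k = (J0 *v a) $ k" for k
      proof -
        define b where "b = cmat Gi *v axis k 1"
        have gb: "cmat G *v b = axis k 1"
          unfolding b_def cmat_mv_axis GGi cmat_one by simp
        have "cip G (J *v a) b = cip G (J0 *v a) b" using h sat by simp
        then show ?thesis by (simp add: cip_dot gb dotc_axis)
      qed
      then show ?thesis by (simp add: vec_eq_iff)
    qed
    then show ?thesis by (simp add: matrix_eq)
  qed
  show ?thesis
    unfolding jacobi_def Gi_def[symmetric] J0_def[symmetric]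
    by (rule the_equality) (use sat uniq in auto)
qed

lemma ip_transpose: "ip (transpose A) u v = ip A v u"
  unfolding ip_def transpose_def
  by (subst sum.swap) (simp add: ac_simps)

lemma congr_entry: "(transpose P ** A ** P) $ a $ b = ip A (P *v axis a 1) (P *v axis b 1)"
  by (simp add: ip_congr ip_axis)

lemma Dm_mul: "(Dm i0 ** A) $ i $ j = (if i = i0 then -1 else 1) * A$i$j"
proof -
  have "(Dm i0 ** A) $ i $ j = (\<Sum>k\<in>UNIV. Dm i0 $ i $ k * A $ k $ j)"
    by (simp add: matrix_matrix_mult_def)
  also have "\<dots> = (\<Sum>k\<in>UNIV. if k = i then (if i = i0 then -1 else 1) * A$i$j else 0)"
    by (rule sum.cong) (auto simp: Dm_def)
  finally show ?thesis by simp
qed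

lemma m_sym: "algebraic_curvature_tensor T \<Longrightarrow> tens T u y y v = tens T v y y u"
proof -
  assume a: "algebraic_curvature_tensor T"
  have "tens T u y y v = tens T y v u y" using cP[OF a] .
  also have "\<dots> = - tens T v y u y" using cA[OF a] .
  also have "tens T v y u y = - tens T v y y u" using cC[OF a] .
  finally show ?thesis by simp
qed

lemma trace_formula:
  assumes f: "frame G i0 p" and Gs: "transpose G = G" and act: "algebraic_curvature_tensor T"
  shows "trace (jacobi G T (cvec y) ** jacobi G T (cvec y)) = complex_of_real
     (\<Sum>a\<in>UNIV. \<Sum>b\<in>UNIV. (if a = i0 then -1 else 1) * (if b = i0 then -1 else 1) * (tens T (p a) y y (p b))^2)"
proof -
  define P where "P = Pm p"
  define D where "D = Dm i0"
  define Mt where "Mt = transpose (Mmat T y)"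
  define X where "X = (P ** D ** transpose P) ** Mt"
  define N where "N = transpose P ** Mt ** P"
  have J: "jacobi G T (cvec y) = cmat X" unfolding X_def P_def D_def Mt_def by (rule jacobi_eq[OF f Gs])
  have "trace (X ** X) = trace (P ** (D ** transpose P ** Mt ** P ** D ** transpose P ** Mt))"
    unfolding X_def by (simp add: matrix_mul_assoc)
  also have "\<dots> = trace ((D ** transpose P ** Mt ** P ** D ** transpose P ** Mt) ** P)"
    by (rule trace_mul_sym)
  also have "(D ** transpose P ** Mt ** P ** D ** transpose P ** Mt) ** P = (D ** N) ** (D ** N)"
    unfolding N_def by (simp add: matrix_mul_assoc)
  finally have tX: "trace (X ** X) = trace ((D ** N) ** (D ** N))" .
  have Nab: "N $ a $ b = tens T (p a) y y (p b)" for a b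
  proof -
    have "N $ a $ b = ip Mt (p a) (p b)" unfolding N_def congr_entry P_def Pm_axis ..
    also have "\<dots> = tens T (p b) y y (p a)" unfolding Mt_def ip_transpose tens_Mmat ..
    also have "\<dots> = tens T (p a) y y (p b)" by (rule m_sym[OF act])
    finally show ?thesis .
  qed
  have "trace ((D ** N) ** (D ** N)) = (\<Sum>a\<in>UNIV. \<Sum>b\<in>UNIV. (D ** N) $ a $ b * (D ** N) $ b $ a)"
    by (simp add: trace_def matrix_matrix_mult_def)
  also have "\<dots> = (\<Sum>a\<in>UNIV. \<Sum>b\<in>UNIV. (if a = i0 then -1 else 1) * (if b = i0 then -1 else 1) * (tens T (p a) y y (p b))^2)"
    unfolding D_def Dm_mul Nab
    by (rule sum.cong[OF refl], rule sum.cong[OF refl]) (simp add: m_sym[OF act, of "p b" y "p a" for a b] power2_eq_square)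
  finally have "trace (X ** X) = \<dots>" using tX by simp
  then show ?thesis unfolding J cmat_mul[symmetric] trace_cmat by simp
qed



lemma split2:
  fixes f :: "'n::finite \<Rightarrow> real"
  assumes "i0 \<noteq> i1"
  shows "(\<Sum>a\<in>UNIV. f a) = (\<Sum>a\<in>UNIV. if a = i0 \<or> a = i1 then 0 else f a) + f i0 + f i1"
proof -
  have "(\<Sum>a\<in>UNIV. f a) = (\<Sum>a\<in>UNIV. (if a = i0 \<or> a = i1 then 0 else f a)
        + (if a = i0 then f a else 0) + (if a = i1 then f a else 0))"
    by (rule sum.cong) (use assms in auto)
  then show ?thesis by (simp add: sum.distrib)
qed

lemma Dm_mv: "(Dm i0 *v c) $ a = (if a = i0 then -1 else 1) * c$a"
proof -
  have "(Dm i0 *v c) $ a = (\<Sum>k\<in>UNIV. Dm i0 $ a $ k * c $ k)"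
    by (simp add: matrix_vector_mult_def)
  also have "\<dots> = (\<Sum>k\<in>UNIV. if k = a then (if a = i0 then -1 else 1) * c$a else 0)"
    by (rule sum.cong) (auto simp: Dm_def)
  finally show ?thesis by simp
qed

lemma cip_cvec: "cip G (cvec u) (cvec v) = complex_of_real (ip G u v)"
  by (simp add: cip_def ip_def cvec_def)

lemma core:
  assumes f: "frame G i0 p" and Gs: "transpose G = G" and act: "algebraic_curvature_tensor T"
  and i1: "i1 \<noteq> i0"
  and tr: "trace (jacobi G T (cvec (p i0 + p i1)) ** jacobi G T (cvec (p i0 + p i1))) = 0"
  and w: "ip G (p i0 + p i1) w = 0"
  shows "tens T w (p i0 + p i1) (p i0 + p i1) w = 0"
proof -
  define y where "y = p i0 + p i1"
  define m where "m a b = tens T (p a) y y (p b)" for a b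
  define \<epsilon> where "\<epsilon> a = (if a = i0 then -1 else (1::real))" for a
  have ii: "i0 \<noteq> i1" using i1 by simp
  define X where "X = (\<Sum>a\<in>UNIV. \<Sum>b\<in>UNIV. (if a = i0 then -1 else 1) * (if b = i0 then -1 else 1) * (tens T (p a) y y (p b))^2)"
  have tf: "trace (jacobi G T (cvec y) ** jacobi G T (cvec y)) = complex_of_real X"
    unfolding X_def by (rule trace_formula[OF f Gs act])
  have "complex_of_real X = 0" using tf tr unfolding y_def by metis
  then have X0: "X = 0" using of_real_eq_0_iff by blast
  have S0: "(\<Sum>a\<in>UNIV. \<Sum>b\<in>UNIV. \<epsilon> a * \<epsilon> b * (m a b)^2) = 0"
    using X0 unfolding X_def m_def \<epsilon>_def .
  have r0: "m i0 b = - m i1 b" for b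
  proof -
    have "m i0 b + m i1 b = tens T y y y (p b)" unfolding m_def y_def by (simp add: tens_add1)
    then show ?thesis using c_xx[OF act] by simp
  qed
  have c0: "m a i0 = - m a i1" for a
  proof -
    have "m a i0 + m a i1 = tens T (p a) y y y" unfolding m_def y_def by (simp add: tens_add4)
    then show ?thesis using c_zz[OF act] by simp
  qed
  define R where "R a = (\<Sum>b\<in>UNIV. if b = i0 \<or> b = i1 then 0 else (m a b)^2)" for a
  have inner: "(\<Sum>b\<in>UNIV. \<epsilon> b * (m a b)^2) = R a" for a
  proof -
    have "(\<Sum>b\<in>UNIV. \<epsilon> b * (m a b)^2) = (\<Sum>b\<in>UNIV. if b = i0 \<or> b = i1 then 0 else \<epsilon> b * (m a b)^2)
        + \<epsilon> i0 * (m a i0)^2 + \<epsilon> i1 * (m a i1)^2" by (rule split2[OF ii])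
    also have "(\<Sum>b\<in>UNIV. if b = i0 \<or> b = i1 then 0 else \<epsilon> b * (m a b)^2) = R a"
      unfolding R_def by (rule sum.cong) (auto simp: \<epsilon>_def)
    finally show ?thesis using c0[of a] i1 by (simp add: \<epsilon>_def)
  qed
  have Rr: "R i0 = R i1" unfolding R_def by (rule sum.cong[OF refl]) (simp add: r0)
  have "(\<Sum>a\<in>UNIV. \<Sum>b\<in>UNIV. \<epsilon> a * \<epsilon> b * (m a b)^2) = (\<Sum>a\<in>UNIV. \<epsilon> a * R a)"
    by (rule sum.cong[OF refl]) (simp add: inner[symmetric] sum_distrib_left mult.assoc)
  also have "\<dots> = (\<Sum>a\<in>UNIV. if a = i0 \<or> a = i1 then 0 else \<epsilon> a * R a) + \<epsilon> i0 * R i0 + \<epsilon> i1 * R i1"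
    by (rule split2[OF ii])
  also have "(\<Sum>a\<in>UNIV. if a = i0 \<or> a = i1 then 0 else \<epsilon> a * R a) = (\<Sum>a\<in>UNIV. if a = i0 \<or> a = i1 then 0 else R a)"
    by (rule sum.cong) (auto simp: \<epsilon>_def)
  finally have tot: "(\<Sum>a\<in>UNIV. if a = i0 \<or> a = i1 then 0 else R a) = 0"
    using S0 Rr i1 by (simp add: \<epsilon>_def)
  have Rnn: "R a \<ge> 0" for a unfolding R_def by (rule sum_nonneg) auto
  have mz: "m a b = 0" if a: "a \<noteq> i0" "a \<noteq> i1" and b: "b \<noteq> i0" "b \<noteq> i1" for a b
  proof -
    have "\<forall>a\<in>UNIV. (if a = i0 \<or> a = i1 then 0 else R a) = 0"
      using tot by (subst (asm) sum_nonneg_eq_0_iff) (auto simp: Rnn)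
    then have "(if a = i0 \<or> a = i1 then 0 else R a) = 0" by blast
    then have "R a = 0" using a by simp
    then have "\<forall>b\<in>UNIV. (if b = i0 \<or> b = i1 then 0 else (m a b)^2) = 0"
      unfolding R_def by (subst (asm) sum_nonneg_eq_0_iff) auto
    then have "(if b = i0 \<or> b = i1 then 0 else (m a b)^2) = 0" by blast
    then show ?thesis using b by simp
  qed
  obtain c where wc: "w = Pm p *v c" using frame_ex[OF f] by blast
  have ipc: "ip G (p a) w = \<epsilon> a * c$a" for a
  proof -
    have "ip G (p a) w = ip G (Pm p *v axis a 1) (Pm p *v c)" by (simp add: Pm_axis wc)
    also have "\<dots> = ip (Dm i0) (axis a 1) c" by (rule frame_ip[OF f])
    also have "\<dots> = \<epsilon> a * c$a" by (simp add: ip_inner inner_axis' Dm_mv \<epsilon>_def)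
    finally show ?thesis .
  qed
  have cc: "c$i0 = c$i1"
    using w ipc[of i0] ipc[of i1] i1 by (simp add: ip_add1 \<epsilon>_def)
  define N where "N = transpose (Pm p) ** Mmat T y ** Pm p"
  have Nab: "N $ a $ b = m a b" for a b
    unfolding N_def congr_entry Pm_axis m_def tens_Mmat ..
  have "tens T w y y w = ip N c c"
    unfolding tens_Mmat wc N_def ip_congr ..
  also have "\<dots> = (\<Sum>a\<in>UNIV. \<Sum>b\<in>UNIV. m a b * c$a * c$b)"
    by (simp add: ip_def Nab)
  also have "\<dots> = 0"
  proof -
    define F where "F a = (\<Sum>b\<in>UNIV. m a b * c$a * c$b)" for a
    have "(\<Sum>a\<in>UNIV. F a) = (\<Sum>a\<in>UNIV. if a = i0 \<or> a = i1 then 0 else F a) + F i0 + F i1"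
      by (rule split2[OF ii])
    moreover have "F i0 = - F i1" unfolding F_def using r0 cc by (simp add: sum_negf[symmetric])
    moreover have "F a = 0" if a: "a \<noteq> i0" "a \<noteq> i1" for a
    proof -
      have "F a = (\<Sum>b\<in>UNIV. if b = i0 \<or> b = i1 then 0 else m a b * c$a * c$b)
          + m a i0 * c$a * c$i0 + m a i1 * c$a * c$i1"
        unfolding F_def by (rule split2[OF ii])
      also have "(\<Sum>b\<in>UNIV. if b = i0 \<or> b = i1 then 0 else m a b * c$a * c$b) = 0"
        by (rule sum.neutral) (use mz[OF a] in auto)
      finally show ?thesis using c0[of a] cc by simp
    qed
    then have "(\<Sum>a\<in>UNIV. if a = i0 \<or> a = i1 then 0 else F a) = 0"
      by (intro sum.neutral) auto
    ultimately show ?thesis unfolding F_def[symmetric] by simp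
  qed
  finally show ?thesis unfolding y_def .
qed



lemma ip_minus2: "ip G x (- y) = - ip G x y"
  by (simp add: ip_def sum_negf)
lemma ip_minus1: "ip G (- x) y = - ip G x y"
  by (simp add: ip_def sum_negf)

lemma null_frame:
  assumes f: "frame G i0 p" and Gs: "transpose G = G" and i1: "i1 \<noteq> i0"
  and x: "ip G x x = 0" and nz: "x \<noteq> 0"
  shows "\<exists>p' k. frame G i0 p' \<and> x = k *\<^sub>R (p' i0 + p' i1)"
proof -
  have sym: "\<And>u v. ip G u v = ip G v u" using ip_sym[OF Gs] by blast
  have fr: "\<And>a b. ip G (p a) (p b) = (if a = b then (if a = i0 then -1 else 1) else 0)"
    using f unfolding frame_def by blast
  have e0: "ip G (p i0) (p i0) = -1" using fr by simp
  have e1: "ip G (p i1) (p i1) = 1" using fr i1 by simp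
  have e01: "ip G (p i0) (p i1) = 0" using fr i1 by simp
  define \<xi> where "\<xi> = - ip G (p i0) x"
  have xi: "\<xi> \<noteq> 0"
  proof
    assume "\<xi> = 0"
    then have "ip G (p i0) x = 0" unfolding \<xi>_def by simp
    then have "x = 0" using frame_timelike_perp[OF f, of "p i0" x] e0 x by simp
    then show False using nz by simp
  qed
  define y where "y = (1/\<xi>) *\<^sub>R x"
  have yy: "ip G y y = 0" unfolding y_def by (simp add: ip_scale1 ip_scale2 x)
  have y0: "ip G (p i0) y = -1" unfolding y_def using xi by (simp add: ip_scale2 ip_minus2 \<xi>_def)
  define u where "u = y - p i0"
  have u0: "ip G (p i0) u = 0" unfolding u_def by (simp add: ip_diff2 y0 e0)
  have uu: "ip G u u = 1" unfolding u_def
    by (simp add: ip_diff1 ip_diff2 yy y0 e0 sym[of y "p i0"])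
  have xeq: "x = \<xi> *\<^sub>R (p i0 + u)" unfolding u_def y_def using xi by simp
  show ?thesis
  proof (cases "u = p i1")
    case True
    then show ?thesis using f xeq by blast
  next
    case False
    define v where "v = p i1 - u"
    have v0: "ip G (p i0) v = 0" unfolding v_def by (simp add: ip_diff2 u0 e01)
    have vnz: "v \<noteq> 0" using False unfolding v_def by simp
    have "ip G v v \<ge> 0 \<and> (ip G v v = 0 \<longrightarrow> v = 0)"
      using frame_timelike_perp[OF f, of "p i0" v] e0 v0 by simp
    then have vpos: "ip G v v > 0" using vnz by force
    define s where "s z = z - (2 * ip G z v / ip G v v) *\<^sub>R v" for z
    have iso: "ip G (s z) (s z') = ip G z z'" for z z'
      unfolding s_def using vpos
      by (simp add: ip_diff1 ip_diff2 ip_scale1 ip_scale2 sym[of v z'] sym[of v z] field_simps)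
    define p' where "p' a = s (p a)" for a
    have f': "frame G i0 p'" unfolding frame_def p'_def iso using fr by simp
    have s0: "p' i0 = p i0" unfolding p'_def s_def using v0 by simp
    have vv: "ip G v v = 2 - 2 * ip G (p i1) u"
      unfolding v_def by (simp add: ip_diff1 ip_diff2 e1 uu sym[of u "p i1"])
    have v1: "ip G (p i1) v = 1 - ip G (p i1) u"
      unfolding v_def by (simp add: ip_diff2 e1)
    have s1: "p' i1 = u"
    proof -
      have "2 * ip G (p i1) v / ip G v v = 1" using vpos unfolding vv v1 by simp
      then show ?thesis unfolding p'_def s_def v_def by simp
    qed
    show ?thesis using f' xeq s0 s1 by metis
  qed
qed

lemma condH:
  assumes f: "frame G i0 p" and Gs: "transpose G = G" and act: "algebraic_curvature_tensor T"
  and i1: "i1 \<noteq> i0"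
  and hyp: "\<forall>x \<in> null_cone G. trace (jacobi G T x ** jacobi G T x) = 0"
  and x: "ip G x x = 0" and xw: "ip G x w = 0"
  shows "tens T w x x w = 0"
proof (cases "x = 0")
  case True
  then show ?thesis by (simp add: tens_zero2)
next
  case False
  obtain p' k where f': "frame G i0 p'" and xk: "x = k *\<^sub>R (p' i0 + p' i1)"
    using null_frame[OF f Gs i1 x False] by blast
  have k: "k \<noteq> 0" using False xk by auto
  have fr: "\<And>a b. ip G (p' a) (p' b) = (if a = b then (if a = i0 then -1 else 1) else 0)"
    using f' unfolding frame_def by blast
  have yy: "ip G (p' i0 + p' i1) (p' i0 + p' i1) = 0"
    using fr i1 by (simp add: ip_add1 ip_add2)
  have "cvec (p' i0 + p' i1) \<in> null_cone G"
    unfolding null_cone_def by (simp add: cip_cvec yy)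
  then have tr: "trace (jacobi G T (cvec (p' i0 + p' i1)) ** jacobi G T (cvec (p' i0 + p' i1))) = 0"
    using hyp by blast
  have yw: "ip G (p' i0 + p' i1) w = 0" using xw k unfolding xk by (simp add: ip_scale1)
  have "tens T w (p' i0 + p' i1) (p' i0 + p' i1) w = 0" by (rule core[OF f' Gs act i1 tr yw])
  then show ?thesis unfolding xk by (simp add: tens_scale2 tens_scale3)
qed

theorem theorem1p2:
  fixes G :: "real^'n^'n" and T :: "'n \<Rightarrow> 'n \<Rightarrow> 'n \<Rightarrow> 'n \<Rightarrow> real"
  assumes "CARD('n) \<ge> 3"
    and "lorentzian G"
    and "algebraic_curvature_tensor T"
    and "\<forall>x \<in> null_cone G. trace (jacobi G T x ** jacobi G T x) = 0"
  shows "\<exists>c::real. \<forall>x y z w. tens T x y z w = c * (ip G x w * ip G y z - ip G x z * ip G y w)"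
proof -
  have Gs: "transpose G = G" using assms(2) unfolding lorentzian_def by blast
  obtain P :: "real^'n^'n" and i0 where "transpose P ** G ** P = Dm i0"
    using assms(2) unfolding lorentzian_def Dm_def by blast
  then have f: "frame G i0 (\<lambda>a. P *v axis a 1)" by (rule P_frame)
  have c2: "card {i0} < CARD('n)" using assms(1) by simp
  obtain i1 where i1: "i1 \<noteq> i0"
  proof -
    have "UNIV \<noteq> {i0}" using c2 by (metis less_irrefl)
    then show ?thesis using that by blast
  qed
  obtain i2 where i2: "i2 \<noteq> i0" "i2 \<noteq> i1"
  proof -
    have "card {i0, i1} \<le> 2" by (simp add: card_insert_if)
    then have "UNIV \<noteq> {i0, i1}" using assms(1) by (metis not_less_eq_eq numeral_le_iff semiring_norm(69) le_trans numeral_3_eq_3 numeral_2_eq_2 eq_iff)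
    then show ?thesis using that by blast
  qed
  show ?thesis
    by (rule partB[OF f Gs assms(3) i1 i2]) (rule condH[OF f Gs assms(3) i1 assms(4)])
qed

end
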